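(* In $G=BS(1,2)$, the subgroup $\mathbb{Z}[1/2]$ has rational conjugacy growth: the series $\sum_{n\geq0}c_0(n)z^n$ is rational, where $c_0(n)$ is the number of conjugacy classes of $G$ contained in $\mathbb{Z}[1/2]$ whose length with respect to $\{a,t\}$ equals $n$.
   Context: $BS(1,2)=\langle a,t\mid tat^{-1}=a^2\rangle\cong \mathbb{Z}[1/2]\rtimes\mathbb{Z}$ via $a\mapsto(1,0)$, $t\mapsto(0,1)$, the generator of $\mathbb{Z}$ acting by multiplication by $2$; $\mathbb{Z}[1/2]=\{(x,0)\}$. The length of a conjugacy class is the minimal word length of its elements. A series is rational if it is a quotient of two polynomials with integer coefficients. *)

theory Defs
  imports Complex_Main "HOL-Computational_Algebra.Polynomial_FPS"
begin

text \<open>BS(1,2) realised as Z[1/2] \<rtimes> Z: elements are pairs (x,k) with x a dyadic rational.\<close>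

definition dyadic :: "rat \<Rightarrow> bool" where
  "dyadic x \<longleftrightarrow> (\<exists>m::int. \<exists>k::nat. x = of_int m / 2 ^ k)"

definition BS :: "(rat \<times> int) set" where
  "BS = {g. dyadic (fst g)}"

definition bs_mult :: "rat \<times> int \<Rightarrow> rat \<times> int \<Rightarrow> rat \<times> int" where
  "bs_mult g h = (fst g + (2::rat) powi (snd g) * fst h, snd g + snd h)"

definition bs_inv :: "rat \<times> int \<Rightarrow> rat \<times> int" where
  "bs_inv g = (- fst g / (2::rat) powi (snd g), - snd g)"

definition bs_one :: "rat \<times> int" where
  "bs_one = (0, 0)"

definition gen_a :: "rat \<times> int" where "gen_a = (1, 0)"
definition gen_t :: "rat \<times> int" where "gen_t = (0, 1)"

definition bs_gens :: "(rat \<times> int) set" where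
  "bs_gens = {gen_a, bs_inv gen_a, gen_t, bs_inv gen_t}"

definition word_eval :: "(rat \<times> int) list \<Rightarrow> rat \<times> int" where
  "word_eval w = foldr bs_mult w bs_one"

definition word_length :: "rat \<times> int \<Rightarrow> nat" where
  "word_length g = (LEAST n. \<exists>w. length w = n \<and> set w \<subseteq> bs_gens \<and> word_eval w = g)"

definition Zhalf :: "(rat \<times> int) set" where
  "Zhalf = {g \<in> BS. snd g = 0}"

definition conj_class :: "rat \<times> int \<Rightarrow> (rat \<times> int) set" where
  "conj_class g = {bs_mult (bs_mult h g) (bs_inv h) | h. h \<in> BS}"

definition class_length :: "(rat \<times> int) set \<Rightarrow> nat" where
  "class_length C = (LEAST n. \<exists>g \<in> C. word_length g = n)"

definition c0 :: "nat \<Rightarrow> nat" where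
  "c0 n = card {C. (\<exists>g \<in> BS. C = conj_class g) \<and> C \<subseteq> Zhalf \<and> class_length C = n}"

definition rational_series :: "int fps \<Rightarrow> bool" where
  "rational_series F \<longleftrightarrow>
     (\<exists>p q :: int poly. q \<noteq> 0 \<and> fps_of_poly q * F = fps_of_poly p)"

end

theory Submission
  imports Defs
begin


function Fn :: "nat \<Rightarrow> nat" where
  "Fn n = (if n \<le> 1 then n else if even n then min n (2 + Fn (n div 2))
           else min n (3 + min (Fn (n div 2)) (Fn (n div 2 + 1))))"
  by auto
termination by (relation "measure id") (auto elim: oddE)

declare Fn.simps[simp del]

lemma Fn_0[simp]: "Fn 0 = 0" by (simp add: Fn.simps)
lemma Fn_1[simp]: "Fn 1 = 1" by (simp add: Fn.simps)
lemma Fn_even: "y \<ge> 1 \<Longrightarrow> Fn (2*y) = min (2*y) (2 + Fn y)"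
  by (subst Fn.simps) auto
lemma Fn_odd: "y \<ge> 1 \<Longrightarrow> Fn (2*y+1) = min (2*y+1) (3 + min (Fn y) (Fn (y+1)))"
  by (subst Fn.simps) auto

lemma Fn_2[simp]: "Fn 2 = 2" using Fn_even[of 1] by simp

lemma Fn_Suc0[simp]: "Fn (Suc 0) = 1" using Fn_1 by simp
lemma Fn_Suc1[simp]: "Fn (Suc (Suc 0)) = 2" using Fn_2 by (simp add: numeral_2_eq_2)

lemma Fn_le: "Fn n \<le> n"
  by (subst Fn.simps) auto

lemma Fn_lip: "Fn (n+1) \<le> Fn n + 1 \<and> Fn n \<le> Fn (n+1) + 1"
proof (induction n rule: less_induct)
  case (less n)
  show ?case
  proof (cases "n \<le> 1")
    case True
    then have "n = 0 \<or> n = 1" by auto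
    then show ?thesis by auto
  next
    case False
    show ?thesis
    proof (cases "even n")
      case True
      then obtain y where y: "n = 2*y" by auto
      with False have "y \<ge> 1" by auto
      have IH: "Fn (y+1) \<le> Fn y + 1 \<and> Fn y \<le> Fn (y+1) + 1" using less y `y\<ge>1` by auto
      show ?thesis using IH Fn_even[OF `y\<ge>1`] Fn_odd[OF `y\<ge>1`] y by auto
    next
      case odd: False
      then obtain y where y: "n = 2*y+1" using oddE by blast
      with False have "y \<ge> 1" by auto
      have IH: "Fn (y+1) \<le> Fn y + 1 \<and> Fn y \<le> Fn (y+1) + 1" using less y `y\<ge>1` by auto
      have e: "Fn (2*(y+1)) = min (2*(y+1)) (2 + Fn (y+1))" by (rule Fn_even) simp
      have "n + 1 = 2*(y+1)" using y by simp
      then show ?thesis using IH e Fn_odd[OF `y\<ge>1`] y by auto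
    qed
  qed
qed

lemma Fn_double_le: "Fn (2*y) \<le> 2 + Fn y"
  by (cases "y = 0") (auto simp: Fn_even)

lemma Fn_double_ge: "Fn y \<le> Fn (2*y)"
  using Fn_le[of y] by (cases "y = 0") (auto simp: Fn_even)

lemma Fn_double: "y \<ge> 2 \<Longrightarrow> Fn (2*y) = 2 + Fn y"
  using Fn_le[of y] by (auto simp: Fn_even)

lemma Fn_4k1: "k \<ge> 2 \<Longrightarrow> Fn (4*k+1) = 5 + Fn k"
proof -
  assume k: "k \<ge> 2"
  have a: "Fn (2*k) = 2 + Fn k" using Fn_double k by simp
  have b: "Fn (2*k+1) = min (2*k+1) (3 + min (Fn k) (Fn (k+1)))" using Fn_odd k by simp
  have "Fn k \<le> Fn (k+1) + 1" using Fn_lip by blast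
  hence "min (Fn (2*k)) (Fn (2*k+1)) = 2 + Fn k" using a b Fn_le[of k] k by auto
  moreover have "Fn (2*(2*k)+1) = min (2*(2*k)+1) (3 + min (Fn (2*k)) (Fn (2*k+1)))"
    using Fn_odd[of "2*k"] k by simp
  ultimately show ?thesis using Fn_le[of k] k by (simp add: algebra_simps)
qed

lemma Fn_4k3: "k \<ge> 3 \<Longrightarrow> Fn (4*k-1) = 5 + Fn k"
proof -
  assume k: "k \<ge> 3"
  have a: "Fn (2*k) = 2 + Fn k" using Fn_double k by simp
  have b: "Fn (2*(k-1)+1) = min (2*(k-1)+1) (3 + min (Fn (k-1)) (Fn (k-1+1)))" using Fn_odd k by simp
  have "Fn k \<le> Fn (k-1) + 1" using Fn_lip[of "k-1"] k by simp
  hence "min (Fn (2*(k-1)+1)) (Fn (2*k)) = 2 + Fn k" using a b Fn_le[of k] k by (auto simp: min_def)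
  moreover have "Fn (2*(2*k-1)+1) = min (2*(2*k-1)+1) (3 + min (Fn (2*k-1)) (Fn (2*k-1+1)))"
    using Fn_odd[of "2*k-1"] k by simp
  moreover have "2*(k-1)+1 = 2*k-1" "2*k-1+1 = 2*k" "2*(2*k-1)+1 = 4*k-1" using k by auto
  ultimately show ?thesis using Fn_le[of k] k by (simp add: algebra_simps)
qed

lemma Fn_exp: "n \<le> 2 ^ Fn n"
proof (induction n rule: less_induct)
  case (less n)
  show ?case
  proof (cases "n \<le> 1")
    case True then have "n = 0 \<or> n = 1" by auto
    then show ?thesis by auto
  next
    case False
    show ?thesis
    proof (cases "even n")
      case True
      then obtain y where y: "n = 2*y" by auto
      with False have "y \<ge> 1" by auto
      have "y \<le> 2 ^ Fn y" using less y `y\<ge>1` by auto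
      moreover have "2*y \<le> 2^(2*y)" by (metis less_exp less_imp_le)
      ultimately show ?thesis using Fn_even[OF `y\<ge>1`] y by (auto simp: min_def power_add)
    next
      case False': False
      then obtain y where y: "n = 2*y+1" using oddE by blast
      with False have "y \<ge> 1" by auto
      have "y \<le> 2 ^ Fn y" "y+1 \<le> 2^Fn (y+1)" using less y `y\<ge>1` by auto
      moreover have "2*y+1 \<le> 2^(2*y+1)" by (metis less_exp less_imp_le)
      ultimately show ?thesis using Fn_odd[OF `y\<ge>1`] y by (auto simp: min_def power_add)
    qed
  qed
qed



lemma p2_add: "(2::rat) powi (a + b) = 2 powi a * 2 powi b"
  by (rule power_int_add) simp

lemma bs_mult_assoc: "bs_mult (bs_mult x y) z = bs_mult x (bs_mult y z)"
  by (simp add: bs_mult_def p2_add algebra_simps)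

lemma bs_one_left[simp]: "bs_mult bs_one x = x"
  by (simp add: bs_mult_def bs_one_def)
lemma bs_one_right[simp]: "bs_mult x bs_one = x"
  by (simp add: bs_mult_def bs_one_def)

lemma foldr_bs: "foldr bs_mult w z = bs_mult (foldr bs_mult w bs_one) z"
  by (induction w) (auto simp: bs_mult_assoc)

lemma eval_append: "word_eval (w @ v) = bs_mult (word_eval w) (word_eval v)"
  unfolding word_eval_def foldr_append by (subst foldr_bs) simp

lemma eval_Cons: "word_eval (s # w) = bs_mult s (word_eval w)"
  unfolding word_eval_def by simp

lemma eval_Nil[simp]: "word_eval [] = (0,0)"
  unfolding word_eval_def bs_one_def by simp

lemma eval_single[simp]: "word_eval [s] = s"
  unfolding word_eval_def by simp

lemma gens_eq: "bs_gens = {(1,0), (-1,0), (0,1), (0,-1)}"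
  by (simp add: bs_gens_def gen_a_def gen_t_def bs_inv_def)

lemma mult_a: "bs_mult (v,k) (e,0) = (v + e * 2 powi k, k)"
  by (simp add: bs_mult_def)
lemma mult_t: "bs_mult (v,k) (0,j) = (v, k + j)"
  by (simp add: bs_mult_def)

fun dval :: "int list \<Rightarrow> int" where
  "dval [] = 0" | "dval (d # ds) = d + 2 * dval ds"

definition dcost :: "int list \<Rightarrow> int" where
  "dcost ds = sum_list (map abs ds)"

lemma dval_snoc0: "dval (ds @ [0]) = dval ds"
  by (induction ds) auto

lemma dval_upd: "i < length ds \<Longrightarrow> dval (ds[i := ds!i + e]) = dval ds + e * 2^i"
proof (induction ds arbitrary: i)
  case Nil then show ?case by simp
next
  case (Cons d ds) then show ?case by (cases i) (auto simp: algebra_simps)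
qed

lemma dcost_upd: "i < length ds \<Longrightarrow> dcost (ds[i := ds!i + e]) \<le> dcost ds + \<bar>e\<bar>"
proof (induction ds arbitrary: i)
  case Nil then show ?case by simp
next
  case (Cons d ds) then show ?case by (cases i) (auto simp: dcost_def abs_triangle_ineq)
qed

lemma dcost_snoc0: "dcost (ds @ [0]) = dcost ds" by (simp add: dcost_def)
lemma dcost_Cons: "dcost (d # ds) = \<bar>d\<bar> + dcost ds" by (simp add: dcost_def)

definition Fz :: "int \<Rightarrow> nat" where "Fz x = Fn (nat \<bar>x\<bar>)"

lemma Fz_le: "int (Fz x) \<le> \<bar>x\<bar>" using Fn_le[of "nat \<bar>x\<bar>"] by (simp add: Fz_def)

lemma Fz_suc: "Fz (x + 1) \<le> Fz x + 1"
proof (cases "x \<ge> 0")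
  case True
  then have "nat \<bar>x+1\<bar> = nat \<bar>x\<bar> + 1" by auto
  then show ?thesis using Fn_lip[of "nat \<bar>x\<bar>"] unfolding Fz_def by metis
next
  case False
  then have "nat \<bar>x\<bar> = nat \<bar>x+1\<bar> + 1" by auto
  then show ?thesis using Fn_lip[of "nat \<bar>x+1\<bar>"] unfolding Fz_def by metis
qed

lemma Fz_neg[simp]: "Fz (- x) = Fz x" by (simp add: Fz_def)

lemma Fz_pred: "Fz (x - 1) \<le> Fz x + 1"
  using Fz_suc[of "- x"] by (metis Fz_neg minus_diff_eq uminus_add_conv_diff)

lemma Fz_add_nat: "Fz (x + int n) \<le> Fz x + n"
proof (induction n)
  case 0 then show ?case by simp
next
  case (Suc n)
  have "Fz (x + int n + 1) \<le> Fz (x + int n) + 1" by (rule Fz_suc)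
  moreover have "Fz (x + int (Suc n)) = Fz (x + int n + 1)" by (simp add: algebra_simps)
  ultimately show ?case using Suc by linarith
qed

lemma Fz_sub_nat: "Fz (x - int n) \<le> Fz x + n"
  using Fz_add_nat[of "-x" n] by (metis Fz_neg minus_diff_eq uminus_add_conv_diff)

lemma Fz_add: "int (Fz (x + d)) \<le> int (Fz x) + \<bar>d\<bar>"
proof (cases "d \<ge> 0")
  case True
  then show ?thesis using Fz_add_nat[of x "nat d"] by simp
next
  case False
  then show ?thesis using Fz_sub_nat[of x "nat (-d)"] by simp
qed

lemma Fz_double_le: "Fz (2*x) \<le> 2 + Fz x"
proof -
  have "nat \<bar>2*x\<bar> = 2 * nat \<bar>x\<bar>" by auto
  then show ?thesis using Fn_double_le by (simp add: Fz_def)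
qed

lemma Fz_double_ge: "Fz x \<le> Fz (2*x)"
proof -
  have "nat \<bar>2*x\<bar> = 2 * nat \<bar>x\<bar>" by auto
  then show ?thesis using Fn_double_ge by (simp add: Fz_def)
qed

lemma Fz_pow_ge: "Fz x \<le> Fz (x * 2^s)"
proof (induction s)
  case 0 then show ?case by simp
next
  case (Suc s)
  then show ?case using Fz_double_ge[of "x * 2^s"] by (simp add: algebra_simps)
qed

lemma digits_bound: "ds \<noteq> [] \<Longrightarrow> int (Fz (dval ds)) \<le> dcost ds + 2 * (int (length ds) - 1)"
proof (induction ds)
  case Nil then show ?case by simp
next
  case (Cons d ds)
  show ?case
  proof (cases "ds = []")
    case True then show ?thesis using Fz_le[of d] by (simp add: dcost_def)
  next
    case False
    have "int (Fz (d + 2 * dval ds)) \<le> int (Fz (2 * dval ds)) + \<bar>d\<bar>"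
      using Fz_add[of "2 * dval ds" d] by (simp add: add.commute)
    also have "\<dots> \<le> 2 + int (Fz (dval ds)) + \<bar>d\<bar>" using Fz_double_le[of "dval ds"] by simp
    finally show ?thesis using Cons.IH[OF False] by (simp add: dcost_Cons)
  qed
qed



definition INV :: "rat \<Rightarrow> int \<Rightarrow> nat \<Rightarrow> bool" where
  "INV v k n \<longleftrightarrow> (\<exists>lo ds. lo \<le> 0 \<and> lo \<le> k \<and> k \<le> lo + int (length ds) - 1 \<and>
     0 \<le> lo + int (length ds) - 1 \<and> ds \<noteq> [] \<and> v = 2 powi lo * of_int (dval ds) \<and>
     dcost ds + 2*(int (length ds) - 1) - \<bar>k\<bar> \<le> int n)"

lemma INV_a: assumes "INV v k n" "\<bar>e\<bar> = 1" shows "INV (v + of_int e * 2 powi k) k (Suc n)"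
proof -
  obtain lo ds where H: "lo \<le> 0" "lo \<le> k" "k \<le> lo + int (length ds) - 1"
     "0 \<le> lo + int (length ds) - 1" "ds \<noteq> []" "v = 2 powi lo * of_int (dval ds)"
     "dcost ds + 2*(int (length ds) - 1) - \<bar>k\<bar> \<le> int n"
    using assms(1) unfolding INV_def by blast
  define i where "i = nat (k - lo)"
  have i: "i < length ds" "int i = k - lo" using H unfolding i_def by auto
  define ds' where "ds' = ds[i := ds!i + e]"
  have "dval ds' = dval ds + e * 2^i" unfolding ds'_def by (rule dval_upd[OF i(1)])
  moreover have "dcost ds' \<le> dcost ds + 1" unfolding ds'_def using dcost_upd[OF i(1), of e] assms(2) by simp
  moreover have "length ds' = length ds" "ds' \<noteq> []" using H unfolding ds'_def by auto
  moreover have "(2::rat) powi lo * 2^i = 2 powi k"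
  proof -
    have "(2::rat) powi lo * 2^i = 2 powi lo * 2 powi (int i)" by simp
    also have "\<dots> = 2 powi (lo + int i)" by (simp add: p2_add)
    finally show ?thesis using i by simp
  qed
  ultimately have "v + of_int e * 2 powi k = 2 powi lo * of_int (dval ds')
      \<and> dcost ds' + 2*(int (length ds') - 1) - \<bar>k\<bar> \<le> int (Suc n)"
    using H by (simp add: algebra_simps)
  then show ?thesis unfolding INV_def using H \<open>length ds' = length ds\<close> \<open>ds' \<noteq> []\<close> by metis
qed

lemma INV_t: assumes "INV v k n" shows "INV v (k+1) (Suc n)"
proof -
  obtain lo ds where H: "lo \<le> 0" "lo \<le> k" "k \<le> lo + int (length ds) - 1"
     "0 \<le> lo + int (length ds) - 1" "ds \<noteq> []" "v = 2 powi lo * of_int (dval ds)"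
     "dcost ds + 2*(int (length ds) - 1) - \<bar>k\<bar> \<le> int n"
    using assms(1) unfolding INV_def by blast
  show ?thesis
  proof (cases "k + 1 \<le> lo + int (length ds) - 1")
    case True
    then show ?thesis unfolding INV_def using H by (intro exI[of _ lo] exI[of _ ds]) auto
  next
    case False
    then have "k = lo + int (length ds) - 1" using H by auto
    then show ?thesis unfolding INV_def using H
      by (intro exI[of _ lo] exI[of _ "ds @ [0]"]) (auto simp: dval_snoc0 dcost_snoc0)
  qed
qed

lemma INV_tinv: assumes "INV v k n" shows "INV v (k-1) (Suc n)"
proof -
  obtain lo ds where H: "lo \<le> 0" "lo \<le> k" "k \<le> lo + int (length ds) - 1"
     "0 \<le> lo + int (length ds) - 1" "ds \<noteq> []" "v = 2 powi lo * of_int (dval ds)"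
     "dcost ds + 2*(int (length ds) - 1) - \<bar>k\<bar> \<le> int n"
    using assms(1) unfolding INV_def by blast
  show ?thesis
  proof (cases "lo \<le> k - 1")
    case True
    then show ?thesis unfolding INV_def using H by (intro exI[of _ lo] exI[of _ ds]) auto
  next
    case False
    then have k: "k = lo" using H by auto
    have "(2::rat) powi (lo - 1) * 2 = 2 powi lo"
      using p2_add[of "lo - 1" 1] by simp
    then have "v = 2 powi (lo - 1) * of_int (dval (0 # ds))" using H by (simp add: algebra_simps)
    then show ?thesis unfolding INV_def using H k
      by (intro exI[of _ "lo - 1"] exI[of _ "0 # ds"]) (auto simp: dcost_Cons)
  qed
qed

lemma word_INV: "set w \<subseteq> bs_gens \<Longrightarrow> word_eval w = (v,k) \<Longrightarrow> INV v k (length w)"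
proof (induction w arbitrary: v k rule: rev_induct)
  case Nil
  then have "v = 0" "k = 0" by auto
  then show ?case unfolding INV_def by (intro exI[of _ 0] exI[of _ "[0]"]) (auto simp: dcost_def)
next
  case (snoc s w)
  obtain v0 k0 where e: "word_eval w = (v0, k0)" by fastforce
  have I: "INV v0 k0 (length w)" using snoc e by auto
  have s: "s \<in> {(1,0), (-1,0), (0,1), (0,-1)}" using snoc.prems gens_eq by auto
  have ev: "(v,k) = bs_mult (v0,k0) s" using snoc.prems e by (simp add: eval_append)
  from s show ?case
  proof (elim insertE emptyE)
    assume "s = (1,0)"
    then have "(v,k) = (v0 + of_int 1 * 2 powi k0, k0)" using ev by (simp add: mult_a)
    then show ?case using INV_a[OF I, of 1] by simp
  next
    assume "s = (-1,0)"
    then have "(v,k) = (v0 + of_int (-1) * 2 powi k0, k0)" using ev by (simp add: mult_a)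
    then show ?case using INV_a[OF I, of "-1"] by simp
  next
    assume "s = (0,1)"
    then have "(v,k) = (v0, k0 + 1)" using ev by (simp add: mult_t)
    then show ?case using INV_t[OF I] by simp
  next
    assume "s = (0,-1)"
    then have "(v,k) = (v0, k0 - 1)" using ev by (simp add: mult_t)
    then show ?case using INV_tinv[OF I] by simp
  qed
qed

lemma lower_bound:
  assumes "set w \<subseteq> bs_gens" "word_eval w = (of_int m * 2 powi j, 0)" "odd m"
  shows "Fz m \<le> length w"
proof -
  obtain lo ds where H: "lo \<le> 0" "ds \<noteq> []" "of_int m * 2 powi j = (2::rat) powi lo * of_int (dval ds)"
     "dcost ds + 2*(int (length ds) - 1) \<le> int (length w)"
    using word_INV[OF assms(1,2)] unfolding INV_def by auto
  have eq: "of_int (dval ds) = (of_int m :: rat) * 2 powi (j - lo)"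
  proof -
    have d: "(2::rat) powi (j - lo) = 2 powi j / 2 powi lo" by (rule power_int_diff) simp
    have nz: "(2::rat) powi lo \<noteq> 0" by simp
    from H(3) have "of_int (dval ds) = (of_int m :: rat) * 2 powi j / 2 powi lo"
      using nz by (simp add: eq_divide_eq)
    then show ?thesis using d by simp
  qed
  have jlo: "j - lo \<ge> 0"
  proof (rule ccontr)
    assume "\<not> j - lo \<ge> 0"
    then have "lo - j = int (Suc (nat (lo - j - 1)))" by simp
    then obtain r where r: "lo - j = int (Suc r)" by blast
    have "(2::rat) powi (j - lo) * 2 ^ Suc r = 1"
    proof -
      have "(2::rat) ^ Suc r = 2 powi (int (Suc r))" by (simp only: power_int_of_nat)
      then have "(2::rat) powi (j - lo) * 2 ^ Suc r = 2 powi (j - lo) * 2 powi (lo - j)" using r by simp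
      also have "\<dots> = 2 powi ((j - lo) + (lo - j))" by (rule p2_add[symmetric])
      finally show ?thesis by simp
    qed
    then have "of_int (dval ds * 2 ^ Suc r) = (of_int m :: rat)" using eq
      by (simp add: algebra_simps)
    then have "dval ds * 2 ^ Suc r = m" by (simp only: of_int_eq_iff)
    then have "m = 2 * (dval ds * 2 ^ r)" by (simp add: algebra_simps)
    then have "even m" by (metis dvd_triv_left)
    then show False using assms(3) by simp
  qed
  then have "of_int (dval ds) = (of_int (m * 2 ^ nat (j - lo)) :: rat)" using eq
    by (simp add: power_int_def)
  then have dv: "dval ds = m * 2 ^ nat (j - lo)" by (simp only: of_int_eq_iff)
  have "int (Fz m) \<le> int (Fz (dval ds))" using Fz_pow_ge dv by simp
  also have "\<dots> \<le> int (length w)" using digits_bound[OF H(2)] H(4) by simp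
  finally show ?thesis by simp
qed



lemma eval_rep_a: "word_eval (replicate k (1,0)) = (of_nat k, 0)"
  by (induction k) (auto simp: eval_Cons bs_mult_def)

lemma eval_conj: "word_eval w = (v,0) \<Longrightarrow> word_eval ((0,1) # w @ [(0,-1)]) = (2*v, 0)"
  by (simp add: eval_Cons eval_append bs_mult_def)

lemma eval_conjinv: "word_eval w = (v,0) \<Longrightarrow> word_eval ((0,-1) # w @ [(0,1)]) = (v/2, 0)"
  by (simp add: eval_Cons eval_append bs_mult_def power_int_minus)

lemma eval_pre_a: "word_eval w = (v,k) \<Longrightarrow> word_eval ((e,0) # w) = (e + v, k)"
  by (simp add: eval_Cons bs_mult_def)

definition negw :: "(rat \<times> int) list \<Rightarrow> (rat \<times> int) list" where
  "negw w = map (\<lambda>(x,j). (-x,j)) w"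

lemma eval_negw: "word_eval (negw w) = (- fst (word_eval w), snd (word_eval w))"
proof (induction w)
  case Nil show ?case by (simp add: negw_def)
next
  case (Cons s w)
  obtain x j where s: "s = (x,j)" by fastforce
  obtain v k where e: "word_eval w = (v,k)" by fastforce
  have "negw (s # w) = (-x, j) # negw w" by (simp add: negw_def s)
  then show ?case using Cons e s by (simp add: eval_Cons bs_mult_def)
qed

lemma negw_gens: "set w \<subseteq> bs_gens \<Longrightarrow> set (negw w) \<subseteq> bs_gens"
proof
  fix y assume "set w \<subseteq> bs_gens" "y \<in> set (negw w)"
  then obtain x j where "(x,j) \<in> set w" "y = (-x,j)" unfolding negw_def by auto
  then have "(x,j) \<in> {(1,0), (-1,0), (0,1), (0,-1)}" "y = (-x,j)" using \<open>set w \<subseteq> bs_gens\<close> gens_eq by auto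
  then show "y \<in> bs_gens" unfolding gens_eq by auto
qed

lemma negw_len[simp]: "length (negw w) = length w" unfolding negw_def by simp

lemma gens_mem[simp]: "(1,0) \<in> bs_gens" "(-1,0) \<in> bs_gens" "(0,1) \<in> bs_gens" "(0,-1) \<in> bs_gens"
  unfolding gens_eq by simp_all

lemma word_nat: "\<exists>w. set w \<subseteq> bs_gens \<and> length w = Fn n \<and> word_eval w = (of_nat n, 0)"
proof (induction n rule: less_induct)
  case (less n)
  have rep: "\<exists>w. set w \<subseteq> bs_gens \<and> length w = n \<and> word_eval w = (of_nat n, 0)"
    by (intro exI[of _ "replicate n (1,0)"]) (auto simp: eval_rep_a)
  show ?case
  proof (cases "n \<le> 1")
    case True
    then have "n = 0 \<or> n = 1" by auto
    then have "Fn n = n" by auto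
    then show ?thesis using rep by simp
  next
    case False
    show ?thesis
    proof (cases "even n")
      case True
      then obtain y where y: "n = 2*y" by auto
      with False have y1: "y \<ge> 1" by auto
      have F: "Fn n = min n (2 + Fn y)" using Fn_even[OF y1] y by simp
      show ?thesis
      proof (cases "Fn n = n")
        case True then show ?thesis using rep by simp
      next
        case False
        then have Fe: "Fn n = 2 + Fn y" using F by (auto simp: min_def split: if_splits)
        obtain w where w: "set w \<subseteq> bs_gens" "length w = Fn y" "word_eval w = (of_nat y, 0)"
          using less[of y] y y1 by auto
        show ?thesis
          by (intro exI[of _ "(0,1) # w @ [(0,-1)]"]) (use w Fe y eval_conj[OF w(3)] in auto)
      qed
    next
      case odd: False
      then obtain y where y: "n = 2*y+1" using oddE by blast
      with False have y1: "y \<ge> 1" by auto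
      have F: "Fn n = min n (3 + min (Fn y) (Fn (y+1)))" using Fn_odd[OF y1] y by simp
      consider "Fn n = n" | "Fn n = 3 + Fn y" | "Fn n = 3 + Fn (y+1)" using F by (auto simp: min_def split: if_splits)
      then show ?thesis
      proof cases
        case 1 then show ?thesis using rep by simp
      next
        case 2
        obtain w where w: "set w \<subseteq> bs_gens" "length w = Fn y" "word_eval w = (of_nat y, 0)"
          using less[of y] y y1 by auto
        have "word_eval ((1,0) # (0,1) # w @ [(0,-1)]) = (1 + 2 * of_nat y, 0)"
          using eval_pre_a[OF eval_conj[OF w(3)]] by simp
        then show ?thesis
          by (intro exI[of _ "(1,0) # (0,1) # w @ [(0,-1)]"]) (use w 2 y in auto)
      next
        case 3
        obtain w where w: "set w \<subseteq> bs_gens" "length w = Fn (y+1)" "word_eval w = (of_nat (y+1), 0)"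
          using less[of "y+1"] y y1 by auto
        have "word_eval ((-1,0) # (0,1) # w @ [(0,-1)]) = (-1 + 2 * of_nat (y+1), 0)"
          using eval_pre_a[OF eval_conj[OF w(3)]] by simp
        then show ?thesis
          by (intro exI[of _ "(-1,0) # (0,1) # w @ [(0,-1)]"]) (use w 3 y in auto)
      qed
    qed
  qed
qed

lemma word_int: "\<exists>w. set w \<subseteq> bs_gens \<and> length w = Fz m \<and> word_eval w = (of_int m, 0)"
proof (cases "m \<ge> 0")
  case True
  obtain w where w: "set w \<subseteq> bs_gens" "length w = Fn (nat m)" "word_eval w = (of_nat (nat m), 0)"
    using word_nat by blast
  then show ?thesis using True by (intro exI[of _ w]) (auto simp: Fz_def)
next
  case False
  obtain w where w: "set w \<subseteq> bs_gens" "length w = Fn (nat (-m))" "word_eval w = (of_nat (nat (-m)), 0)"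
    using word_nat by blast
  then show ?thesis using False
    by (intro exI[of _ "negw w"]) (auto simp: Fz_def negw_gens eval_negw)
qed

lemma word_conj_pos: "set w \<subseteq> bs_gens \<Longrightarrow> word_eval w = (v,0) \<Longrightarrow>
   \<exists>w'. set w' \<subseteq> bs_gens \<and> word_eval w' = (2^n * v, 0)"
proof (induction n)
  case 0 then show ?case by auto
next
  case (Suc n)
  then obtain w' where w': "set w' \<subseteq> bs_gens" "word_eval w' = (2^n * v, 0)" by auto
  show ?case
    by (intro exI[of _ "(0,1) # w' @ [(0,-1)]"]) (use w' eval_conj[OF w'(2)] in auto)
qed

lemma word_conj_neg: "set w \<subseteq> bs_gens \<Longrightarrow> word_eval w = (v,0) \<Longrightarrow>
   \<exists>w'. set w' \<subseteq> bs_gens \<and> word_eval w' = (v / 2^n, 0)"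
proof (induction n)
  case 0 then show ?case by auto
next
  case (Suc n)
  then obtain w' where w': "set w' \<subseteq> bs_gens" "word_eval w' = (v / 2^n, 0)" by auto
  show ?case
    by (intro exI[of _ "(0,-1) # w' @ [(0,1)]"]) (use w' eval_conjinv[OF w'(2)] in \<open>auto simp: field_simps\<close>)
qed

lemma word_conj: "set w \<subseteq> bs_gens \<Longrightarrow> word_eval w = (v,0) \<Longrightarrow>
   \<exists>w'. set w' \<subseteq> bs_gens \<and> word_eval w' = (2 powi l * v, 0)"
proof (cases "l \<ge> 0")
  case True
  assume "set w \<subseteq> bs_gens" "word_eval w = (v,0)"
  then obtain w' where "set w' \<subseteq> bs_gens" "word_eval w' = (2^(nat l) * v, 0)" using word_conj_pos by blast
  moreover have "(2::rat) powi l = 2^(nat l)" using True by (simp add: power_int_def)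
  ultimately show ?thesis by auto
next
  case False
  assume "set w \<subseteq> bs_gens" "word_eval w = (v,0)"
  then obtain w' where "set w' \<subseteq> bs_gens" "word_eval w' = (v / 2^(nat (-l)), 0)" using word_conj_neg by blast
  moreover have "(2::rat) powi l = inverse (2^(nat (-l)))" using False by (simp add: power_int_def power_one_over inverse_eq_divide)
  ultimately show ?thesis by (auto simp: field_simps)
qed

lemma wl_le: "set w \<subseteq> bs_gens \<Longrightarrow> word_eval w = g \<Longrightarrow> word_length g \<le> length w"
  unfolding word_length_def by (rule Least_le) auto

lemma wl_ex: "set w \<subseteq> bs_gens \<Longrightarrow> word_eval w = g \<Longrightarrow>
   \<exists>w'. set w' \<subseteq> bs_gens \<and> word_eval w' = g \<and> length w' = word_length g"
proof -
  assume "set w \<subseteq> bs_gens" "word_eval w = g"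
  then have "\<exists>n w. length w = n \<and> set w \<subseteq> bs_gens \<and> word_eval w = g" by auto
  from LeastI_ex[OF this] show ?thesis unfolding word_length_def by auto
qed

lemma wl_class_lower: assumes "odd m" shows "Fz m \<le> word_length (2 powi l * of_int m, 0)"
proof -
  obtain w where w: "set w \<subseteq> bs_gens" "word_eval w = (of_int m, 0)" using word_int by blast
  obtain w' where w': "set w' \<subseteq> bs_gens" "word_eval w' = (2 powi l * of_int m, 0)"
    using word_conj[OF w] by blast
  obtain w'' where w'': "set w'' \<subseteq> bs_gens" "word_eval w'' = (of_int m * 2 powi l, 0)"
     "length w'' = word_length (2 powi l * of_int m, 0)"
    using wl_ex[OF w'] by (auto simp: mult.commute)
  show ?thesis using lower_bound[OF w''(1,2) assms] w''(3) by simp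
qed

lemma wl_int: assumes "odd m" shows "word_length (of_int m, 0) = Fz m"
proof -
  obtain w where w: "set w \<subseteq> bs_gens" "length w = Fz m" "word_eval w = (of_int m, 0)" using word_int by blast
  have "word_length (of_int m, 0) \<le> Fz m" using wl_le[OF w(1,3)] w(2) by simp
  moreover have "Fz m \<le> word_length (of_int m, 0)" using wl_class_lower[OF assms, of 0] by simp
  ultimately show ?thesis by simp
qed



lemma conj_Z: "bs_mult (bs_mult h (x,0)) (bs_inv h) = (2 powi (snd h) * x, 0)"
proof -
  obtain y l where h: "h = (y,l)" by fastforce
  have nz: "(2::rat) powi l \<noteq> 0" by simp
  show ?thesis using nz by (simp add: h bs_mult_def bs_inv_def field_simps)
qed

lemma dyadic0: "dyadic 0" unfolding dyadic_def by (intro exI[of _ 0]) simp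

lemma dyadic_pow: "dyadic (2 powi l * of_int m)"
proof (cases "l \<ge> 0")
  case True
  then have "(2::rat) powi l * of_int m = of_int (2^nat l * m) / 2^0" by (simp add: power_int_def)
  then show ?thesis unfolding dyadic_def by blast
next
  case False
  then have "(2::rat) powi l * of_int m = of_int m / 2^nat (-l)"
    by (simp add: power_int_def power_one_over)
  then show ?thesis unfolding dyadic_def by blast
qed

lemma class_Z: "conj_class (x,0) = {(2 powi l * x, 0::int) | l. True}"
proof
  show "conj_class (x,0) \<subseteq> {(2 powi l * x, 0::int) | l. True}"
    unfolding conj_class_def using conj_Z by blast
next
  show "{(2 powi l * x, 0::int) | l. True} \<subseteq> conj_class (x,0)"
  proof
    fix g assume "g \<in> {(2 powi l * x, 0::int) | l. True}"
    then obtain l where g: "g = (2 powi l * x, 0)" by blast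
    have "(0::rat, l) \<in> BS" unfolding BS_def using dyadic0 by simp
    moreover have "g = bs_mult (bs_mult (0,l) (x,0)) (bs_inv (0,l))" using conj_Z[of "(0,l)" x] g by simp
    ultimately show "g \<in> conj_class (x,0)" unfolding conj_class_def by blast
  qed
qed

lemma self_in_class: "g \<in> conj_class g"
proof -
  have "bs_one \<in> BS" unfolding BS_def bs_one_def using dyadic0 by simp
  moreover have "g = bs_mult (bs_mult bs_one g) (bs_inv bs_one)"
    by (simp add: bs_inv_def bs_one_def bs_mult_def)
  ultimately show ?thesis unfolding conj_class_def by blast
qed

lemma Cl_shift: "conj_class (2 powi j * x, 0) = conj_class (x, 0)"
proof -
  have "{(2 powi l * (2 powi j * x), 0) | l. True} = {(2 powi l * x, 0) | l::int. True}"
  proof -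
    have "\<And>l. (2::rat) powi l * (2 powi j * x) = 2 powi (l + j) * x" by (simp add: p2_add)
    moreover have "\<And>l. (2::rat) powi l * x = 2 powi ((l - j) + j) * x" by simp
    ultimately show ?thesis by (metis (no_types, opaque_lifting))
  qed
  then show ?thesis by (simp add: class_Z)
qed

definition Cl :: "int \<Rightarrow> (rat \<times> int) set" where "Cl m = conj_class (of_int m, 0)"

lemma class_length_odd: assumes "odd m" shows "class_length (Cl m) = Fz m"
  unfolding class_length_def
proof (rule Least_equality)
  have "(of_int m, 0) \<in> Cl m" unfolding Cl_def by (rule self_in_class)
  then show "\<exists>g\<in>Cl m. word_length g = Fz m" using wl_int[OF assms] by blast
next
  fix n assume "\<exists>g\<in>Cl m. word_length g = n"
  then obtain g where g: "g \<in> Cl m" "word_length g = n" by blast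
  then obtain l where "g = (2 powi l * of_int m, 0)" unfolding Cl_def class_Z by blast
  then show "Fz m \<le> n" using wl_class_lower[OF assms, of l] g by simp
qed

lemma class_length_0: "class_length (Cl 0) = 0"
proof -
  have "(0,0) \<in> Cl 0" unfolding Cl_def using self_in_class[of "(0,0)"] by simp
  moreover have "word_length (0,0) = 0" using wl_le[of "[]" "(0,0)"] by simp
  ultimately have "\<exists>g\<in>Cl 0. word_length g = 0" by blast
  then show ?thesis unfolding class_length_def by (metis (mono_tags, lifting) Least_le le_zero_eq)
qed

lemma Cl_sub: "Cl m \<subseteq> Zhalf"
  unfolding Cl_def class_Z Zhalf_def BS_def using dyadic_pow by auto

lemma int_decomp: "a \<noteq> (0::int) \<Longrightarrow> \<exists>e m. odd m \<and> a = 2^e * m"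
proof (induction "nat \<bar>a\<bar>" arbitrary: a rule: less_induct)
  case less
  show ?case
  proof (cases "odd a")
    case True then show ?thesis by (intro exI[of _ 0] exI[of _ a]) simp
  next
    case False
    then obtain b where b: "a = 2*b" by auto
    with less.prems have "b \<noteq> 0" "nat \<bar>b\<bar> < nat \<bar>a\<bar>" by auto
    then obtain e m where "odd m" "b = 2^e * m" using less.hyps by blast
    then show ?thesis using b by (intro exI[of _ "Suc e"] exI[of _ m]) simp
  qed
qed

lemma dyadic_decomp: assumes "dyadic x" "x \<noteq> 0" shows "\<exists>m j. odd m \<and> x = 2 powi j * of_int m"
proof -
  obtain a k where x: "x = of_int a / 2^k" using assms(1) unfolding dyadic_def by blast
  with assms(2) have "a \<noteq> 0" by auto
  then obtain e m where em: "odd m" "a = 2^e * m" using int_decomp by blast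
  have "(2::rat) powi (int e - int k) = 2 powi (int e) / 2 powi (int k)" by (rule power_int_diff) simp
  then have "x = 2 powi (int e - int k) * of_int m" using x em by simp
  then show ?thesis using em by blast
qed

lemma odd_pow_eq: assumes "odd m" "odd m'" "(of_int m' :: rat) = 2 powi l * of_int m" shows "m' = m"
proof (cases "l \<ge> 0")
  case True
  then have "(of_int m' :: rat) = of_int (2^nat l * m)" using assms(3) by (simp add: power_int_def)
  then have e: "m' = 2^nat l * m" by (simp only: of_int_eq_iff)
  show ?thesis
  proof (cases "nat l")
    case 0 then show ?thesis using e by simp
  next
    case (Suc r) then have "m' = 2 * (2^r * m)" using e by simp
    then show ?thesis using assms(2) by (metis dvd_triv_left)
  qed
next
  case False
  then have "(of_int m' :: rat) = of_int m / 2^nat (-l)" using assms(3)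
    by (simp add: power_int_def power_one_over)
  then have "(of_int (m' * 2^nat (-l)) :: rat) = of_int m" by (simp add: field_simps)
  then have e: "m = m' * 2^nat (-l)" by (simp only: of_int_eq_iff)
  show ?thesis
  proof (cases "nat (-l)")
    case 0 then show ?thesis using e by simp
  next
    case (Suc r) then have "m = 2 * (2^r * m')" using e by simp
    then show ?thesis using assms(1) by (metis dvd_triv_left)
  qed
qed

lemma Cl_inj: "inj_on Cl {m. m = 0 \<or> odd m}"
proof (rule inj_onI)
  fix m m' assume A: "m \<in> {m. m = 0 \<or> odd m}" "m' \<in> {m. m = 0 \<or> odd m}" "Cl m = Cl m'"
  have "(of_int m', 0) \<in> Cl m" using A(3) self_in_class unfolding Cl_def by metis
  then obtain l where l: "(of_int m' :: rat) = 2 powi l * of_int m" unfolding Cl_def class_Z by blast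
  show "m = m'"
  proof (cases "m = 0 \<or> m' = 0")
    case True
    then show ?thesis using l by auto
  next
    case False
    then show ?thesis using A(1,2) odd_pow_eq[OF _ _ l] by auto
  qed
qed

lemma classes_eq: "{C. (\<exists>g \<in> BS. C = conj_class g) \<and> C \<subseteq> Zhalf \<and> class_length C = n}
   = Cl ` {m. (m = 0 \<and> n = 0) \<or> (odd m \<and> Fz m = n)}"
proof
  show "{C. (\<exists>g \<in> BS. C = conj_class g) \<and> C \<subseteq> Zhalf \<and> class_length C = n}
     \<subseteq> Cl ` {m. (m = 0 \<and> n = 0) \<or> (odd m \<and> Fz m = n)}"
  proof
    fix C assume "C \<in> {C. (\<exists>g \<in> BS. C = conj_class g) \<and> C \<subseteq> Zhalf \<and> class_length C = n}"
    then obtain g where g: "g \<in> BS" "C = conj_class g" "C \<subseteq> Zhalf" "class_length C = n" by blast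
    then have "g \<in> Zhalf" using self_in_class by blast
    then obtain x where x: "g = (x,0)" "dyadic x" unfolding Zhalf_def BS_def by (cases g) auto
    show "C \<in> Cl ` {m. (m = 0 \<and> n = 0) \<or> (odd m \<and> Fz m = n)}"
    proof (cases "x = 0")
      case True
      then have "C = Cl 0" using g x unfolding Cl_def by simp
      then show ?thesis using class_length_0 g by auto
    next
      case False
      then obtain m j where mj: "odd m" "x = 2 powi j * of_int m" using dyadic_decomp x by blast
      then have "C = Cl m" using g x Cl_shift unfolding Cl_def by simp
      then show ?thesis using class_length_odd[OF mj(1)] g mj by auto
    qed
  qed
next
  show "Cl ` {m. (m = 0 \<and> n = 0) \<or> (odd m \<and> Fz m = n)}
     \<subseteq> {C. (\<exists>g \<in> BS. C = conj_class g) \<and> C \<subseteq> Zhalf \<and> class_length C = n}"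
  proof
    fix C assume "C \<in> Cl ` {m. (m = 0 \<and> n = 0) \<or> (odd m \<and> Fz m = n)}"
    then obtain m where m: "C = Cl m" "(m = 0 \<and> n = 0) \<or> (odd m \<and> Fz m = n)" by blast
    have "(of_int m, 0) \<in> BS" unfolding BS_def using dyadic_pow[of 0 m] by simp
    moreover have "class_length C = n" using m class_length_0 class_length_odd by auto
    ultimately show "C \<in> {C. (\<exists>g \<in> BS. C = conj_class g) \<and> C \<subseteq> Zhalf \<and> class_length C = n}"
      using m Cl_sub unfolding Cl_def by blast
  qed
qed

lemma c0_eq: "c0 n = card {m. (m = 0 \<and> n = 0) \<or> (odd m \<and> Fz m = n)}"
proof -
  have "inj_on Cl {m. (m = 0 \<and> n = 0) \<or> (odd m \<and> Fz m = n)}"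
    by (rule inj_on_subset[OF Cl_inj]) auto
  then show ?thesis unfolding c0_def classes_eq by (rule card_image)
qed



lemma Fn_pos: "Fn k = n \<Longrightarrow> k \<ge> n" using Fn_le[of k] by simp

lemma fin_Fn: "finite {k::nat. P k \<and> Fn k = n}"
proof (rule finite_subset)
  show "{k::nat. P k \<and> Fn k = n} \<subseteq> {..2^n}" using Fn_exp by auto
qed simp

definition Od :: "nat \<Rightarrow> nat" where "Od n = card {k::nat. odd k \<and> Fn k = n}"
definition Pn :: "nat \<Rightarrow> nat" where "Pn n = card {k::nat. k \<ge> 1 \<and> Fn k = n}"

lemma c0_pos: assumes "n \<ge> 1" shows "c0 n = 2 * Od n"
proof -
  define B where "B = {k::nat. odd k \<and> Fn k = n}"
  have finB: "finite B" unfolding B_def by (rule fin_Fn)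
  have "{m::int. (m = 0 \<and> n = 0) \<or> (odd m \<and> Fz m = n)} = int ` B \<union> (\<lambda>k. - int k) ` B"
  proof (rule set_eqI, rule iffI)
    fix m :: int assume "m \<in> {m. (m = 0 \<and> n = 0) \<or> (odd m \<and> Fz m = n)}"
    then have m: "odd m" "Fn (nat \<bar>m\<bar>) = n" using assms by (auto simp: Fz_def)
    show "m \<in> int ` B \<union> (\<lambda>k. - int k) ` B"
    proof (cases "m \<ge> 0")
      case True
      then have "nat m \<in> B" "m = int (nat m)" using m unfolding B_def by (auto simp: even_nat_iff)
      then show ?thesis by blast
    next
      case False
      then have "nat (-m) \<in> B" "m = - int (nat (-m))" using m unfolding B_def by (auto simp: even_nat_iff)
      then show ?thesis by blast
    qed
  next
    fix m :: int assume "m \<in> int ` B \<union> (\<lambda>k. - int k) ` B"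
    then show "m \<in> {m. (m = 0 \<and> n = 0) \<or> (odd m \<and> Fz m = n)}"
      unfolding B_def by (auto simp: Fz_def)
  qed
  moreover have "int ` B \<inter> (\<lambda>k. - int k) ` B = {}"
  proof (rule ccontr)
    assume "int ` B \<inter> (\<lambda>k. - int k) ` B \<noteq> {}"
    then obtain a b where ab: "a \<in> B" "b \<in> B" "int a = - int b" by auto
    have "a = 0" using ab(3) by linarith
    then show False using ab(1) unfolding B_def by simp
  qed
  moreover have "card (int ` B) = card B" by (rule card_image) simp
  moreover have "card ((\<lambda>k. - int k) ` B) = card B" by (rule card_image) (simp add: inj_on_def)
  ultimately show ?thesis using finB unfolding c0_eq Od_def B_def[symmetric]
    by (simp add: card_Un_disjoint)
qed

lemma Od_rec: assumes "n \<ge> 13" shows "Od n = 2 * Pn (n - 5)"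
proof -
  define S where "S = {j::nat. j \<ge> 1 \<and> Fn j = n - 5}"
  have finS: "finite S" unfolding S_def by (rule fin_Fn)
  have "{k::nat. odd k \<and> Fn k = n} = (\<lambda>j. 4*j+1) ` S \<union> (\<lambda>j. 4*j-1) ` S"
  proof (rule set_eqI, rule iffI)
    fix k assume "k \<in> {k::nat. odd k \<and> Fn k = n}"
    then have k: "odd k" "Fn k = n" by auto
    then have k13: "k \<ge> 13" using Fn_le[of k] k(2) assms by linarith
    have "k mod 4 = 1 \<or> k mod 4 = 3" using k(1) by presburger
    then show "k \<in> (\<lambda>j. 4*j+1) ` S \<union> (\<lambda>j. 4*j-1) ` S"
    proof
      assume "k mod 4 = 1"
      then have kj: "k = 4 * (k div 4) + 1" by presburger
      have "k div 4 \<ge> 2" using k13 by simp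
      then have "Fn k = 5 + Fn (k div 4)" using Fn_4k1 kj by metis
      then have "k div 4 \<in> S" using k unfolding S_def using \<open>k div 4 \<ge> 2\<close> by auto
      then show ?thesis using kj by blast
    next
      assume "k mod 4 = 3"
      then have kj: "k = 4 * (k div 4 + 1) - 1" by presburger
      have "k div 4 + 1 \<ge> 3" using k13 by simp
      then have "Fn k = 5 + Fn (k div 4 + 1)" using Fn_4k3 kj by metis
      then have "k div 4 + 1 \<in> S" using k unfolding S_def by auto
      then show ?thesis using kj by blast
    qed
  next
    fix k assume "k \<in> (\<lambda>j. 4*j+1) ` S \<union> (\<lambda>j. 4*j-1) ` S"
    then obtain j where j: "j \<in> S" "k = 4*j+1 \<or> k = 4*j-1" by blast
    then have "j \<ge> 8" using Fn_pos[of j "n-5"] assms unfolding S_def by auto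
    then show "k \<in> {k::nat. odd k \<and> Fn k = n}"
      using j Fn_4k1[of j] Fn_4k3[of j] assms unfolding S_def by auto
  qed
  moreover have "(\<lambda>j. 4*j+1) ` S \<inter> (\<lambda>j. 4*j-1) ` S = {}"
  proof -
    have "\<And>a b::nat. b \<ge> 1 \<Longrightarrow> 4*a+1 \<noteq> 4*b-1" by presburger
    then show ?thesis unfolding S_def by auto
  qed
  moreover have "card ((\<lambda>j. 4*j+1) ` S) = card S" by (rule card_image) (simp add: inj_on_def)
  moreover have "card ((\<lambda>j. 4*j-1) ` S) = card S" by (rule card_image) (auto simp: inj_on_def S_def)
  ultimately show ?thesis using finS unfolding Od_def Pn_def S_def[symmetric]
    by (simp add: card_Un_disjoint)
qed

lemma Pn_rec: assumes "n \<ge> 13" shows "Pn n = Od n + Pn (n - 2)"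
proof -
  define S where "S = {y::nat. y \<ge> 1 \<and> Fn y = n - 2}"
  define Oset where "Oset = {k::nat. odd k \<and> Fn k = n}"
  have finS: "finite S" unfolding S_def by (rule fin_Fn)
  have finO: "finite Oset" unfolding Oset_def by (rule fin_Fn)
  have "{k::nat. k \<ge> 1 \<and> Fn k = n} = Oset \<union> (\<lambda>y. 2*y) ` S"
  proof (rule set_eqI, rule iffI)
    fix k assume "k \<in> {k::nat. k \<ge> 1 \<and> Fn k = n}"
    then have k: "k \<ge> 1" "Fn k = n" by auto
    then have k13: "k \<ge> 13" using Fn_le[of k] k(2) assms by linarith
    show "k \<in> Oset \<union> (\<lambda>y. 2*y) ` S"
    proof (cases "odd k")
      case True then show ?thesis using k unfolding Oset_def by auto
    next
      case False
      then obtain y where y: "k = 2*y" by auto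
      then have "y \<ge> 2" using k13 by simp
      then have "Fn k = 2 + Fn y" using Fn_double y by simp
      then have "y \<in> S" using k \<open>y \<ge> 2\<close> unfolding S_def by auto
      then show ?thesis using y by blast
    qed
  next
    fix k assume "k \<in> Oset \<union> (\<lambda>y. 2*y) ` S"
    then show "k \<in> {k::nat. k \<ge> 1 \<and> Fn k = n}"
    proof
      assume "k \<in> Oset" then show ?thesis unfolding Oset_def by (auto elim: oddE)
    next
      assume "k \<in> (\<lambda>y. 2*y) ` S"
      then obtain y where y: "y \<in> S" "k = 2*y" by blast
      then have "y \<ge> 2" using Fn_pos[of y "n-2"] assms unfolding S_def by auto
      then show ?thesis using y Fn_double[of y] assms unfolding S_def by auto
    qed
  qed
  moreover have "Oset \<inter> (\<lambda>y. 2*y) ` S = {}" unfolding Oset_def by auto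
  moreover have "card ((\<lambda>y. 2*y) ` S) = card S" by (rule card_image) (simp add: inj_on_def)
  ultimately show ?thesis using finS finO unfolding Od_def Pn_def S_def[symmetric] Oset_def[symmetric]
    by (simp add: card_Un_disjoint)
qed

lemma Od_rec2: assumes "n \<ge> 18" shows "Od n = Od (n-2) + 2 * Od (n-5)"
proof -
  have "Od n = 2 * Pn (n-5)" using Od_rec assms by simp
  also have "Pn (n-5) = Od (n-5) + Pn (n-5-2)" using Pn_rec[of "n-5"] assms by simp
  also have "Od (n-2) = 2 * Pn (n-2-5)" using Od_rec[of "n-2"] assms by simp
  moreover have "n-5-2 = n-2-5" by simp
  ultimately show ?thesis by simp
qed

lemma c0_rec: assumes "n \<ge> 18" shows "int (c0 n) = int (c0 (n-2)) + 2 * int (c0 (n-5))"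
  using Od_rec2[OF assms] c0_pos[of n] c0_pos[of "n-2"] c0_pos[of "n-5"] assms by simp

theorem proposition3p9:
  shows "rational_series (Abs_fps (\<lambda>n. int (c0 n)))"
proof -
  define C where "C = Abs_fps (\<lambda>n. int (c0 n))"
  define q :: "int poly" where "q = 1 - monom 1 2 - monom 2 5"
  define R where "R = fps_of_poly q * C"
  have fq: "fps_of_poly q = 1 - fps_X^2 - fps_const 2 * fps_X^5"
    unfolding q_def by (simp add: fps_of_poly_diff fps_of_poly_monom fps_of_poly_monom')
  have Rn: "fps_nth R n = int (c0 n) - (if n < 2 then 0 else int (c0 (n-2)))
               - 2 * (if n < 5 then 0 else int (c0 (n-5)))" for n
    unfolding R_def fq by (simp add: algebra_simps fps_X_power_mult_nth fps_X_power_mult_right_nth C_def)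
  have R0: "n \<ge> 18 \<Longrightarrow> fps_nth R n = 0" for n using Rn[of n] c0_rec[of n] by simp
  define p where "p = Poly (map (\<lambda>i. fps_nth R i) [0..<18])"
  have "fps_of_poly p = R"
  proof (rule fps_ext)
    fix n
    show "fps_nth (fps_of_poly p) n = fps_nth R n"
    proof (cases "n < 18")
      case True then show ?thesis unfolding p_def by (simp add: nth_default_nth)
    next
      case False then show ?thesis using R0[of n] unfolding p_def by (simp add: nth_default_beyond)
    qed
  qed
  moreover have "q \<noteq> 0"
  proof
    assume "q = 0"
    then have "coeff q 0 = 0" by simp
    then show False unfolding q_def by (simp add: coeff_monom)
  qed
  ultimately show ?thesis unfolding rational_series_def R_def C_def by metis
qed

end
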